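(* Let $\mathcal{O}$ be a one-counter system with state set $Q$ and let $a\in\mathbb{N}$. There exists a one-counter system $\mathcal{O}_a$ with the same state set $Q$ such that for all $p,q\in Q$ and every $K\in\mathbb{N}$: there is a path of length exactly $K$ from $(p,0)$ to $(q,0)$ in $\mathcal{O}_a$ if and only if there is a path from $(p,a)$ to $(q,a)$ in $\mathcal{O}$ on which exactly $K+1$ of the appearing configurations (counted with multiplicity, i.e., by position along the path) have counter value at least $a$.
   Context: $\mathbb{N}=\{0,1,2,\dots\}$. A one-counter system (OCS) $\mathcal{O}$ consists of a finite set $Q$ of states, a set $T_{>0}\subseteq Q\times\{-1,0,1\}\times Q$ of non-zero transitions and a set $T_{=0}\subseteq Q\times\{0,1\}\times Q$ of zero tests; $T=T_{>0}\cup T_{=0}$. A configuration is a pair $(q,c)\in Q\times\mathbb{N}$, with state $q$ and counter value $c$. A transition $t=(p,d,q)\in T$ can be fired in configuration $(p,c)$ if either $t\in T_{>0}$ and $c>0$, or $t\in T_{=0}$ and $c=0$; the result is $(q,c+d)$, and we write $(p,c)\xrightarrow{t}(q,c+d)$. A path is a sequence $(\gamma_1,t_1)(\gamma_2,t_2)\cdots(\gamma_m,t_m)$ of configurations and transitions such that there are configurations with $\gamma_i\xrightarrow{t_i}\gamma_{i+1}$ for $i=1,\dots,m$; its source is $\gamma_1$, its target is $\gamma_{m+1}$, its length is $m$, the configurations appearing on it are $\gamma_1,\dots,\gamma_{m+1}$, and it is a path from its source to its target. *)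

theory Defs
  imports Main
begin

record 'q ocs =
  states :: "'q set"
  tpos :: "('q \<times> int \<times> 'q) set"
  tzero :: "('q \<times> int \<times> 'q) set"

definition wf_ocs :: "'q ocs \<Rightarrow> bool" where
  "wf_ocs S \<longleftrightarrow> finite (states S)
     \<and> tpos S \<subseteq> states S \<times> {-1, 0, 1} \<times> states S
     \<and> tzero S \<subseteq> states S \<times> {0, 1} \<times> states S"

type_synonym 'q config = "'q \<times> nat"

definition ocs_step :: "'q ocs \<Rightarrow> 'q config \<Rightarrow> ('q \<times> int \<times> 'q) \<Rightarrow> 'q config \<Rightarrow> bool" where
  "ocs_step S \<gamma> t \<gamma>' \<longleftrightarrow>
     (case t of (p, d, q) \<Rightarrow>
        fst \<gamma> = p \<and> fst \<gamma>' = q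
        \<and> ((t \<in> tpos S \<and> snd \<gamma> > 0) \<or> (t \<in> tzero S \<and> snd \<gamma> = 0))
        \<and> int (snd \<gamma>') = int (snd \<gamma>) + d)"

text \<open>A path is given by the list cs of its appearing configurations (gamma_1 .. gamma_(m+1))
  and the list ts of its transitions (t_1 .. t_m); source = hd cs, target = last cs,
  length = length ts.\<close>
definition ocs_path :: "'q ocs \<Rightarrow> 'q config list \<Rightarrow> ('q \<times> int \<times> 'q) list \<Rightarrow> bool" where
  "ocs_path S cs ts \<longleftrightarrow> length cs = length ts + 1
     \<and> (\<forall>i < length ts. ocs_step S (cs ! i) (ts ! i) (cs ! Suc i))"

end

theory Submission
  imports Defs
begin

inductive below :: "'q ocs \<Rightarrow> nat \<Rightarrow> 'q config \<Rightarrow> 'q config \<Rightarrow> bool" for S a where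
  b1: "ocs_step S g t g' \<Longrightarrow> a \<le> snd g' \<Longrightarrow> below S a g g'"
| b2: "ocs_step S g t g1 \<Longrightarrow> snd g1 < a \<Longrightarrow> below S a g1 g' \<Longrightarrow> below S a g g'"

definition mkO :: "'q ocs \<Rightarrow> nat \<Rightarrow> 'q ocs" where
  "mkO S a = \<lparr>states = states S, tpos = tpos S,
     tzero = {(p,d,q). p \<in> states S \<and> q \<in> states S \<and> d \<in> {0,1} \<and> below S a (p,a) (q, nat (int a + d))}\<rparr>"

lemma path_Nil: "ocs_path S cs [] \<longleftrightarrow> (\<exists>x. cs = [x])"
  unfolding ocs_path_def by (auto simp: length_Suc_conv)

lemma path_Cons: "ocs_path S cs (t#ts) \<longleftrightarrow> (\<exists>x cs'. cs = x#cs' \<and> ocs_step S x t (hd cs') \<and> ocs_path S cs' ts)"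
proof
  assume h: "ocs_path S cs (t#ts)"
  then obtain x cs' where cs: "cs = x#cs'" unfolding ocs_path_def by (cases cs) auto
  have l: "length cs' = length ts + 1" using h cs unfolding ocs_path_def by auto
  then obtain y cs'' where "cs' = y # cs''" by (cases cs') auto
  then show "\<exists>x cs'. cs = x#cs' \<and> ocs_step S x t (hd cs') \<and> ocs_path S cs' ts"
    using h cs l unfolding ocs_path_def by fastforce
next
  assume "\<exists>x cs'. cs = x#cs' \<and> ocs_step S x t (hd cs') \<and> ocs_path S cs' ts"
  then obtain x cs' where h: "cs = x#cs'" "ocs_step S x t (hd cs')" "ocs_path S cs' ts" by blast
  then obtain y cs'' where c2: "cs' = y # cs''" unfolding ocs_path_def by (cases cs') auto
  show "ocs_path S cs (t#ts)" unfolding ocs_path_def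
  proof (intro conjI allI impI)
    show "length cs = length (t # ts) + 1" using h unfolding ocs_path_def by auto
  next
    fix i assume "i < length (t#ts)"
    then show "ocs_step S (cs ! i) ((t # ts) ! i) (cs ! Suc i)"
      using h c2 unfolding ocs_path_def by (cases i) auto
  qed
qed

lemma path_ConsI: "ocs_step S x t (hd cs) \<Longrightarrow> ocs_path S cs ts \<Longrightarrow> ocs_path S (x#cs) (t#ts)"
  by (rule path_Cons[THEN iffD2]) blast

lemma path_ConsD: "ocs_path S cs (t#ts) \<Longrightarrow> (\<exists>x cs'. cs = x#cs' \<and> ocs_step S x t (hd cs') \<and> ocs_path S cs' ts)"
  by (rule path_Cons[THEN iffD1])

lemma step_bound:
  assumes "wf_ocs S" "ocs_step S g t g'"
  shows "snd g' \<le> snd g + 1 \<and> snd g \<le> snd g' + 1 \<and> fst g \<in> states S \<and> fst g' \<in> states S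
     \<and> (0 < snd g \<longrightarrow> t \<in> tpos S) \<and> (snd g = 0 \<longrightarrow> t \<in> tzero S)"
proof -
  obtain p d q where t: "t = (p,d,q)" by (cases t) auto
  have "t \<in> tpos S \<or> t \<in> tzero S" using assms(2) t unfolding ocs_step_def by auto
  then have "p \<in> states S \<and> q \<in> states S \<and> d \<in> {-1,0,1}" using assms(1) t unfolding wf_ocs_def by auto
  then show ?thesis using assms(2) t unfolding ocs_step_def by auto
qed

lemma below_props:
  assumes "wf_ocs S"
  shows "below S a g g' \<Longrightarrow> fst g \<in> states S \<and> fst g' \<in> states S \<and> a \<le> snd g'
     \<and> snd g' \<le> max (snd g) (a - 1) + 1"
proof (induction rule: below.induct)
  case (b1 g t g')
  then show ?case using step_bound[OF assms b1(1)] by auto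
next
  case (b2 g t g1 g')
  then show ?case using step_bound[OF assms b2(1)] by auto
qed

lemma Oa_step_below:
  assumes "ocs_step (mkO S a) (p,c) t (q,c')"
  shows "below S a (p,c+a) (q,c'+a)"
proof -
  obtain p1 d q1 where t: "t = (p1,d,q1)" by (cases t) auto
  have pq: "p1 = p" "q1 = q" and dd: "int c' = int c + d" using assms t unfolding ocs_step_def by auto
  have "(t \<in> tpos S \<and> c > 0) \<or> (t \<in> tzero (mkO S a) \<and> c = 0)"
    using assms t unfolding ocs_step_def mkO_def by auto
  then show ?thesis
  proof
    assume "t \<in> tpos S \<and> c > 0"
    then have "ocs_step S (p,c+a) t (q,c'+a)" using t pq dd unfolding ocs_step_def by auto
    then show ?thesis by (rule b1) simp
  next
    assume h: "t \<in> tzero (mkO S a) \<and> c = 0"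
    then have "below S a (p,a) (q, nat (int a + d))" using t pq unfolding mkO_def by auto
    moreover have "nat (int a + d) = c' + a" using dd h by auto
    ultimately show ?thesis using h by simp
  qed
qed

lemma below_Oa_step:
  assumes wf: "wf_ocs S" and bl: "below S a g g'" and ga: "a \<le> snd g"
  shows "\<exists>t. ocs_step (mkO S a) (fst g, snd g - a) t (fst g', snd g' - a)"
  using bl
proof cases
  case (b1 t)
  obtain p d q where t: "t = (p,d,q)" by (cases t) auto
  note sb = step_bound[OF wf b1(1)]
  have st: "fst g = p" "fst g' = q" "int (snd g') = int (snd g) + d" using b1(1) t unfolding ocs_step_def by auto
  show ?thesis
  proof (cases "a < snd g")
    case True
    then have "t \<in> tpos S" using sb by auto
    then have "ocs_step (mkO S a) (fst g, snd g - a) t (fst g', snd g' - a)"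
      using True st t b1(2) unfolding ocs_step_def mkO_def by auto
    then show ?thesis by blast
  next
    case False
    then have ea: "snd g = a" using ga by auto
    have "d \<in> {0,1}" using st ea b1(2) sb by auto
    moreover have "nat (int a + d) = snd g'" using st ea by auto
    moreover have "below S a (p,a) (fst g', snd g')" using bl st ea by (cases g) auto
    ultimately have "t \<in> tzero (mkO S a)" using sb st t unfolding mkO_def by auto
    then have "ocs_step (mkO S a) (fst g, snd g - a) t (fst g', snd g' - a)"
      using st t ea b1(2) unfolding ocs_step_def mkO_def by auto
    then show ?thesis by blast
  qed
next
  case (b2 t g1)
  obtain p d q where t: "t = (p,d,q)" by (cases t) auto
  note sb = step_bound[OF wf b2(1)]
  note bp = below_props[OF wf b2(3)]
  have ea: "snd g = a" using sb b2(2) ga by auto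
  have e2: "snd g' = a" using bp b2(2) by auto
  define t' where "t' = (fst g, 0::int, fst g')"
  have bp2: "fst g \<in> states S" "fst g' \<in> states S" using below_props[OF wf bl] by auto
  have "below S a (fst g, a) (fst g', nat (int a + 0))" using bl ea e2 by (cases g, cases g') auto
  then have "t' \<in> tzero (mkO S a)" using bp2 unfolding mkO_def t'_def by auto
  then have "ocs_step (mkO S a) (fst g, snd g - a) t' (fst g', snd g' - a)"
    using ea e2 unfolding ocs_step_def t'_def by auto
  then show ?thesis by blast
qed

lemma below_prepend:
  assumes "below S a g g'"
  shows "ocs_path S cs ts \<Longrightarrow> hd cs = g' \<Longrightarrow> \<exists>cs1 ts1. ocs_path S cs1 ts1 \<and> hd cs1 = g \<and> last cs1 = last cs
     \<and> length (filter (\<lambda>\<gamma>. a \<le> snd \<gamma>) cs1) = (if a \<le> snd g then 1 else 0) + length (filter (\<lambda>\<gamma>. a \<le> snd \<gamma>) cs)"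
  using assms
proof (induction arbitrary: cs ts rule: below.induct)
  case (b1 g t g')
  have ne: "cs \<noteq> []" using b1(3) unfolding ocs_path_def by auto
  have "ocs_path S (g#cs) (t#ts)" using b1(1,3,4) by (intro path_ConsI) simp_all
  then show ?case using ne by (intro exI[of _ "g#cs"] exI[of _ "t#ts"]) auto
next
  case (b2 g t g1 g')
  obtain cs1 ts1 where h: "ocs_path S cs1 ts1" "hd cs1 = g1" "last cs1 = last cs"
    "length (filter (\<lambda>\<gamma>. a \<le> snd \<gamma>) cs1) = length (filter (\<lambda>\<gamma>. a \<le> snd \<gamma>) cs)"
    using b2 by fastforce
  have ne: "cs1 \<noteq> []" using h(1) unfolding ocs_path_def by auto
  have "ocs_path S (g#cs1) (t#ts1)" using b2(1) h by (intro path_ConsI) simp_all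
  then show ?case using ne h by (intro exI[of _ "g#cs1"] exI[of _ "t#ts1"]) auto
qed

lemma dir1:
  assumes "wf_ocs S"
  shows "ocs_path (mkO S a) cs ts \<Longrightarrow> \<exists>cs2 ts2. ocs_path S cs2 ts2 \<and> hd cs2 = (fst (hd cs), snd (hd cs) + a)
     \<and> last cs2 = (fst (last cs), snd (last cs) + a) \<and> length (filter (\<lambda>\<gamma>. a \<le> snd \<gamma>) cs2) = length ts + 1"
proof (induction ts arbitrary: cs)
  case Nil
  then obtain x where "cs = [x]" using path_Nil by blast
  moreover have "ocs_path S [(fst x, snd x + a)] []" using path_Nil by blast
  ultimately show ?case by (intro exI[of _ "[(fst x, snd x + a)]"] exI[of _ "[]"]) auto
next
  case (Cons t ts)
  then obtain x cs' where h: "cs = x#cs'" "ocs_step (mkO S a) x t (hd cs')" "ocs_path (mkO S a) cs' ts"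
    using path_ConsD by blast
  have ne: "cs' \<noteq> []" using h(3) unfolding ocs_path_def by auto
  obtain cs2 ts2 where p: "ocs_path S cs2 ts2" "hd cs2 = (fst (hd cs'), snd (hd cs') + a)"
     "last cs2 = (fst (last cs'), snd (last cs') + a)" "length (filter (\<lambda>\<gamma>. a \<le> snd \<gamma>) cs2) = length ts + 1"
    using Cons.IH h(3) by blast
  have "below S a (fst x, snd x + a) (fst (hd cs'), snd (hd cs') + a)"
    using Oa_step_below[of S a "fst x" "snd x" t "fst (hd cs')" "snd (hd cs')"] h(2) by simp
  from below_prepend[OF this p(1) p(2)] obtain cs1 ts1 where
    "ocs_path S cs1 ts1" "hd cs1 = (fst x, snd x + a)" "last cs1 = last cs2"
    "length (filter (\<lambda>\<gamma>. a \<le> snd \<gamma>) cs1) = 1 + length (filter (\<lambda>\<gamma>. a \<le> snd \<gamma>) cs2)" by auto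
  then show ?case using p h ne by (intro exI[of _ cs1] exI[of _ ts1]) auto
qed

lemma dir2:
  assumes wf: "wf_ocs S"
  shows "ocs_path S cs ts \<Longrightarrow> a \<le> snd (last cs) \<Longrightarrow>
    \<exists>g' cs' ts'. a \<le> snd g' \<and> (if a \<le> snd (hd cs) then g' = hd cs else below S a (hd cs) g')
      \<and> ocs_path (mkO S a) cs' ts' \<and> hd cs' = (fst g', snd g' - a)
      \<and> last cs' = (fst (last cs), snd (last cs) - a)
      \<and> length ts' + 1 = length (filter (\<lambda>\<gamma>. a \<le> snd \<gamma>) cs)"
proof (induction ts arbitrary: cs)
  case Nil
  then obtain x where x: "cs = [x]" using path_Nil by blast
  have "ocs_path (mkO S a) [(fst x, snd x - a)] []" using path_Nil by blast
  then show ?case using x Nil(2) by (intro exI[of _ x] exI[of _ "[(fst x, snd x - a)]"] exI[of _ "[]"]) auto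
next
  case (Cons t ts)
  then obtain x cs1 where h: "cs = x#cs1" "ocs_step S x t (hd cs1)" "ocs_path S cs1 ts"
    using path_ConsD by blast
  have ne: "cs1 \<noteq> []" using h(3) unfolding ocs_path_def by auto
  have la: "a \<le> snd (last cs1)" using Cons(3) h ne by auto
  obtain g' cs' ts' where ih: "a \<le> snd g'" "if a \<le> snd (hd cs1) then g' = hd cs1 else below S a (hd cs1) g'"
    "ocs_path (mkO S a) cs' ts'" "hd cs' = (fst g', snd g' - a)"
    "last cs' = (fst (last cs1), snd (last cs1) - a)"
    "length ts' + 1 = length (filter (\<lambda>\<gamma>. a \<le> snd \<gamma>) cs1)"
    using Cons.IH[OF h(3) la] by blast
  have bx: "below S a x g'"
  proof (cases "a \<le> snd (hd cs1)")
    case True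
    have "g' = hd cs1" using ih(2) True by simp
    then show ?thesis using b1[OF h(2) True] by simp
  next
    case False
    have "below S a (hd cs1) g'" using ih(2) False by simp
    then show ?thesis using b2[OF h(2)] False by simp
  qed
  have cnt: "length (filter (\<lambda>\<gamma>. a \<le> snd \<gamma>) cs) = (if a \<le> snd x then 1 else 0) + length (filter (\<lambda>\<gamma>. a \<le> snd \<gamma>) cs1)"
    using h by auto
  have nec: "cs' \<noteq> []" using ih(3) unfolding ocs_path_def by auto
  show ?case
  proof (cases "a \<le> snd x")
    case True
    obtain t' where st: "ocs_step (mkO S a) (fst x, snd x - a) t' (fst g', snd g' - a)"
      using below_Oa_step[OF wf bx True] by blast
    have "ocs_path (mkO S a) ((fst x, snd x - a) # cs') (t'#ts')" using st ih(3,4) by (intro path_ConsI) simp_all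
    then show ?thesis using True ih h ne nec cnt
      by (intro exI[of _ x] exI[of _ "(fst x, snd x - a) # cs'"] exI[of _ "t'#ts'"]) auto
  next
    case False
    then show ?thesis using ih h ne cnt bx
      by (intro exI[of _ g'] exI[of _ cs'] exI[of _ ts']) auto
  qed
qed

theorem mainTheorem13:
  fixes S :: "'q ocs" and a :: nat
  assumes "wf_ocs S"
  shows "\<exists>Oa :: 'q ocs. wf_ocs Oa \<and> states Oa = states S \<and>
    (\<forall>p \<in> states S. \<forall>q \<in> states S. \<forall>K :: nat.
      (\<exists>cs ts. ocs_path Oa cs ts \<and> length ts = K \<and> hd cs = (p, 0) \<and> last cs = (q, 0))
      \<longleftrightarrow>
      (\<exists>cs ts. ocs_path S cs ts \<and> hd cs = (p, a) \<and> last cs = (q, a)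
         \<and> length (filter (\<lambda>\<gamma>. snd \<gamma> \<ge> a) cs) = K + 1))"
proof (intro exI[of _ "mkO S a"] conjI ballI allI iffI)
  show "wf_ocs (mkO S a)" using assms unfolding wf_ocs_def mkO_def by auto
  show "states (mkO S a) = states S" unfolding mkO_def by simp
next
  fix p q K
  assume "\<exists>cs ts. ocs_path (mkO S a) cs ts \<and> length ts = K \<and> hd cs = (p, 0) \<and> last cs = (q, 0)"
  then obtain cs ts where h: "ocs_path (mkO S a) cs ts" "length ts = K" "hd cs = (p, 0)" "last cs = (q, 0)" by blast
  show "\<exists>cs ts. ocs_path S cs ts \<and> hd cs = (p, a) \<and> last cs = (q, a)
         \<and> length (filter (\<lambda>\<gamma>. snd \<gamma> \<ge> a) cs) = K + 1"
  proof -
    obtain cs2 ts2 where p: "ocs_path S cs2 ts2" "hd cs2 = (fst (hd cs), snd (hd cs) + a)"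
     "last cs2 = (fst (last cs), snd (last cs) + a)" "length (filter (\<lambda>\<gamma>. a \<le> snd \<gamma>) cs2) = length ts + 1"
      using dir1[OF assms h(1)] by blast
    have "hd cs2 = (p,a)" "last cs2 = (q,a)" using p(2,3) h(3,4) by simp_all
    then show ?thesis using p(1,4) h(2) by blast
  qed
next
  fix p q K
  assume "\<exists>cs ts. ocs_path S cs ts \<and> hd cs = (p, a) \<and> last cs = (q, a)
         \<and> length (filter (\<lambda>\<gamma>. snd \<gamma> \<ge> a) cs) = K + 1"
  then obtain cs ts where h: "ocs_path S cs ts" "hd cs = (p, a)" "last cs = (q, a)"
         "length (filter (\<lambda>\<gamma>. snd \<gamma> \<ge> a) cs) = K + 1" by blast
  have la: "a \<le> snd (last cs)" using h(3) by simp
  obtain g' cs' ts' where d: "a \<le> snd g'" "if a \<le> snd (hd cs) then g' = hd cs else below S a (hd cs) g'"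
      "ocs_path (mkO S a) cs' ts'" "hd cs' = (fst g', snd g' - a)"
      "last cs' = (fst (last cs), snd (last cs) - a)"
      "length ts' + 1 = length (filter (\<lambda>\<gamma>. a \<le> snd \<gamma>) cs)"
    using dir2[OF assms h(1) la] by blast
  show "\<exists>cs ts. ocs_path (mkO S a) cs ts \<and> length ts = K \<and> hd cs = (p, 0) \<and> last cs = (q, 0)"
  proof -
    have "g' = (p,a)" using d(2) h(2) by simp
    then have "hd cs' = (p, 0)" using d(4) by simp
    moreover have "last cs' = (q, 0)" using d(5) h(3) by simp
    moreover have "length ts' = K" using d(6) h(4) by simp
    ultimately show ?thesis using d(3) by blast
  qed
qed

end
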